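(* Let $u\in\mathbb{R}^m$. If there exists $b\in\mathbb{R}^p$ with $\mathcal{P}(b)\neq\emptyset$ such that $\max_{x\in\mathcal{P}(b)} Kg(x,u)\le b$ (the maximum taken componentwise), then $u$ is solvable, and there is $x\in\mathcal{P}(b)$ with $f(x,u)=0$.
   Context: Let $f:\mathbb{R}^n\times\mathbb{R}^m\to\mathbb{R}^n$ be continuous and differentiable, and suppose there are a continuously differentiable map $\psi:\mathbb{R}^n\times\mathbb{R}^m\to\mathbb{R}^q$ and a constant matrix $M\in\mathbb{R}^{n\times q}$ with $f=M\psi$. There is a base point $(x_0,u_0)$ with $f(x_0,u_0)=0$ at which $J_{f,0}=\frac{\partial f}{\partial x}\big|_{(x_0,u_0)}$ is nonsingular. Let $J_{\psi,0}=\frac{\partial \psi}{\partial x}\big|_{(x_0,u_0)}\in\mathbb{R}^{q\times n}$ and $g(x,u)=\psi(x,u)-J_{\psi,0}x$. A fixed matrix $A\in\mathbb{R}^{p\times n}$ is chosen so that for every $b\in\mathbb{R}^p$ the polytope $\mathcal{P}(b)=\{x: Ax\le b\}$ is bounded. Set $K=-AJ_{f,0}^{-1}M\in\mathbb{R}^{p\times q}$. $u$ is solvable if there is $x$ with $f(x,u)=0$. Vector inequalities are componentwise. *)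

theory Defs
  imports "HOL-Analysis.Analysis"
begin

definition polytope :: "real^'n^'p \<Rightarrow> real^'p \<Rightarrow> (real^'n) set" where
  "polytope A b = {x. \<forall>i. (A *v x) $ i \<le> b $ i}"

definition solvable :: "(real^'n \<Rightarrow> real^'m \<Rightarrow> real^'n) \<Rightarrow> real^'m \<Rightarrow> bool" where
  "solvable f u \<longleftrightarrow> (\<exists>x. f x u = 0)"

end

theory Submission
  imports Defs "HOL-Analysis.Analysis"
begin

lemma mvneg: fixes A :: "real^'n^'m" shows "A *v (- x) = - (A *v x)"
  by (vector matrix_vector_mult_def sum_negf)

lemma negmv: fixes A :: "real^'n^'m" shows "(- A) *v x = - (A *v x)"
  by (vector matrix_vector_mult_def sum_negf)

theorem lemma4:
  fixes f :: "real^'n \<Rightarrow> real^'m \<Rightarrow> real^'n"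
    and \<psi> :: "real^'n \<Rightarrow> real^'m \<Rightarrow> real^'q"
    and \<psi>' :: "((real^'n) \<times> (real^'m)) \<Rightarrow> (((real^'n) \<times> (real^'m)) \<Rightarrow>\<^sub>L (real^'q))"
    and M :: "real^'q^'n"
    and A :: "real^'n^'p"
    and x0 :: "real^'n" and u0 :: "real^'m" and u :: "real^'m" and b :: "real^'p"
  assumes f_cont: "continuous_on UNIV (\<lambda>z. f (fst z) (snd z))"
    and f_diff: "\<forall>z. (\<lambda>z. f (fst z) (snd z)) differentiable (at z)"
    and psi_deriv: "\<forall>z. ((\<lambda>z. \<psi> (fst z) (snd z)) has_derivative blinfun_apply (\<psi>' z)) (at z)"
    and psi_C1: "continuous_on UNIV \<psi>'"
    and f_eq: "\<forall>x v. f x v = M *v \<psi> x v"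
    and base: "f x0 u0 = 0"
    and Jf_inv: "invertible (matrix (frechet_derivative (\<lambda>x. f x u0) (at x0)))"
    and A_bounded: "\<forall>c. bounded (polytope A c)"
    and P_nonempty: "polytope A b \<noteq> {}"
    and hyp: "\<forall>i. \<forall>x\<in>polytope A b.
         ((- (A ** matrix_inv (matrix (frechet_derivative (\<lambda>x. f x u0) (at x0))) ** M))
            *v (\<psi> x u - matrix (frechet_derivative (\<lambda>x. \<psi> x u0) (at x0)) *v x)) $ i \<le> b $ i"
  shows "solvable f u \<and> (\<exists>x\<in>polytope A b. f x u = 0)"
proof -
  define J where "J = matrix (frechet_derivative (\<lambda>x. f x u0) (at x0))"
  define Jp where "Jp = matrix (frechet_derivative (\<lambda>x. \<psi> x u0) (at x0))"
  define Ji where "Ji = matrix_inv J"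
  have JJi: "J ** Ji = mat 1"
    using someI_ex[OF Jf_inv[folded J_def, unfolded invertible_def]] unfolding Ji_def matrix_inv_def by blast
  have dpsi: "((\<lambda>x. \<psi> x v) has_derivative (\<lambda>h. blinfun_apply (\<psi>' (x, v)) (h, 0))) (at x)"
    for x :: "real^'n" and v :: "real^'m"
  proof -
    have "((\<lambda>x. (x, v)) has_derivative (\<lambda>h. (h, 0))) (at x)"
      by (auto intro!: derivative_eq_intros)
    from has_derivative_compose[OF this psi_deriv[rule_format, of "(x,v)"]]
    show ?thesis by (simp add: o_def)
  qed
  define D where "D = (\<lambda>h. blinfun_apply (\<psi>' (x0, u0)) (h, 0))"
  have dD: "((\<lambda>x. \<psi> x u0) has_derivative D) (at x0)" using dpsi D_def by simp
  have linD: "linear D" using has_derivative_linear[OF dD] .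
  have Jp_eq: "Jp = matrix D" unfolding Jp_def using frechet_derivative_at[OF dD] by simp
  have dF: "((\<lambda>x. f x u0) has_derivative (\<lambda>h. M *v D h)) (at x0)"
  proof -
    have "((\<lambda>x. M *v \<psi> x u0) has_derivative (\<lambda>h. M *v D h)) (at x0)"
      using bounded_linear.has_derivative[OF matrix_vector_mul_bounded_linear dD] .
    thus ?thesis using f_eq by simp
  qed
  have J_eq: "J = M ** Jp"
  proof -
    have "J = matrix ((\<lambda>h. M *v h) \<circ> D)" unfolding J_def using frechet_derivative_at[OF dF] by (simp add: o_def)
    also have "\<dots> = M ** matrix D"
      by (subst matrix_compose[OF linD]) (auto simp: matrix_vector_mul_linear)
    finally show ?thesis using Jp_eq by simp
  qed
  define g where "g = (\<lambda>x. \<psi> x u - Jp *v x)"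
  define T where "T = (\<lambda>x. - (Ji *v (M *v g x)))"
  define S where "S = polytope A b"
  have contg: "continuous_on UNIV g"
  proof -
    have "continuous_on UNIV (\<lambda>x. \<psi> x u)"
      using dpsi by (meson differentiable_def differentiable_imp_continuous_on differentiable_on_def)
    thus ?thesis unfolding g_def by (intro continuous_intros) (auto intro: linear_continuous_on matrix_vector_mul_linear)
  qed
  have contT: "continuous_on S T"
    unfolding T_def
    by (intro continuous_on_minus continuous_on_compose2[OF linear_continuous_on[OF matrix_vector_mul_bounded_linear]]
        continuous_on_compose2[OF linear_continuous_on[OF matrix_vector_mul_bounded_linear] contg]) (auto intro: continuous_on_subset[OF contg])
  have closedS: "closed S"
  proof -
    have "S = (\<Inter>i. {x. (A *v x) $ i \<le> b $ i})" unfolding S_def polytope_def by auto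
    moreover have "closed {x. (A *v x) $ i \<le> b $ i}" for i
      by (intro closed_Collect_le continuous_intros continuous_on_compose2[OF linear_continuous_on[OF matrix_vector_mul_bounded_linear]]) auto
    ultimately show ?thesis by auto
  qed
  have compS: "compact S" using closedS A_bounded S_def by (simp add: compact_eq_bounded_closed)
  have key: "(A *v (s *\<^sub>R x + t *\<^sub>R y)) $ i \<le> b $ i"
    if x: "\<forall>i. (A *v x) $ i \<le> b $ i" and y: "\<forall>i. (A *v y) $ i \<le> b $ i"
      and st: "0 \<le> s" "0 \<le> t" "s + t = 1" for x y :: "real^'n" and s t :: real and i
  proof -
    have "(A *v (s *\<^sub>R x + t *\<^sub>R y)) $ i = s * (A *v x) $ i + t * (A *v y) $ i"
      by (simp add: matrix_vector_right_distrib matrix_vector_mult_scaleR)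
    also have "\<dots> \<le> s * b $ i + t * b $ i"
      using st x y by (intro add_mono mult_left_mono) auto
    also have "\<dots> = b $ i" using st by (metis distrib_right mult_1)
    finally show ?thesis .
  qed
  have convS: "convex S"
    unfolding S_def polytope_def convex_def using key by auto
  have TS: "T \<in> S \<rightarrow> S"
  proof
    fix x assume xS: "x \<in> S"
    have "A *v T x = (- (A ** Ji ** M)) *v g x"
      unfolding T_def by (simp add: matrix_vector_mul_assoc mvneg negmv matrix_mul_assoc)
    thus "T x \<in> S" using hyp xS unfolding S_def polytope_def g_def J_def Jp_def Ji_def
      by (auto simp: J_def Ji_def)
  qed
  obtain x where xS: "x \<in> S" and fx: "T x = x"
    using brouwer[OF compS convS] P_nonempty contT TS S_def by blast
  have "J *v x = - (M *v g x)"
    using fx unfolding T_def by (metis JJi matrix_vector_mul_assoc matrix_vector_mul_lid mvneg)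
  hence "f x u = 0"
    using f_eq J_eq unfolding g_def
    by (simp add: matrix_vector_mult_diff_distrib matrix_vector_mul_assoc[symmetric])
  thus ?thesis using xS S_def solvable_def by blast
qed

end
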